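(* Let $n>2$, $V=\mathbb{F}_2^n$, and let $W\le V$ with $\dim(W)=n-2$. Let $\phi\in\mathrm{Sym}(V)$ be an involution centralising $\sigma_W$ and such that $\phi$ maps no coset of $W$ in $V$ to itself. Then $\phi\in\mathrm{AGL}(V)$.
   Context: For $v\in V$, $\sigma_v:x\mapsto x+v$, and $\sigma_W=\{\sigma_w:w\in W\}$. Any permutation centralising $\sigma_W$ permutes the cosets of $W$. $\mathrm{AGL}(V)$ is the affine group of maps $x\mapsto xL+v$, $L\in\mathrm{GL}(V)$, $v\in V$. *)

theory Defs
  imports "HOL-Analysis.Analysis" "HOL-Library.Z2"
begin

text \<open>V = F_2^n is modelled as bit ^ 'n with n = CARD('n).
  Translation by v: x maps to x + v.\<close>

definition transl :: "'a::plus \<Rightarrow> 'a \<Rightarrow> 'a" where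
  "transl v = (\<lambda>x. x + v)"

definition AGL :: "(bit ^ 'n \<Rightarrow> bit ^ 'n) set" where
  "AGL = {f. \<exists>L v. Vector_Spaces.linear (*s) (*s) L \<and> bij L \<and> (\<forall>x. f x = L x + v)}"

end

theory Submission imports Defs begin

lemma bit_cases2: "(k::bit) = 0 \<or> k = 1"
  using bit_not_zero_iff by blast

lemma vadd_self[simp]: "(x::bit^'n) + x = 0"
  by (simp add: vec_eq_iff)

lemma vminus_eq: "(x::bit^'n) - y = x + y"
  by (simp add: vec_eq_iff)

lemma span_ins_iff:
  fixes S :: "(bit^'n) set"
  assumes "vec.subspace S"
  shows "x \<in> vec.span (insert a S) \<longleftrightarrow> x \<in> S \<or> x + a \<in> S"
proof -
  have hS: "vec.span S = S" using assms vec.span_eq_iff by blast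
  have "x \<in> vec.span (insert a S) \<longleftrightarrow> (\<exists>k. x - k *s a \<in> vec.span S)"
    by (rule vec.span_breakdown_eq)
  also have "\<dots> \<longleftrightarrow> x \<in> S \<or> x + a \<in> S"
  proof
    assume "\<exists>k. x - k *s a \<in> vec.span S"
    then obtain k where "x + k *s a \<in> S" by (auto simp: vminus_eq hS)
    thus "x \<in> S \<or> x + a \<in> S" using bit_cases2[of k] by auto
  next
    assume "x \<in> S \<or> x + a \<in> S"
    hence "x - 0 *s a \<in> vec.span S \<or> x - 1 *s a \<in> vec.span S"
      using assms by (auto simp: vminus_eq hS)
    thus "\<exists>k. x - k *s a \<in> vec.span S" by blast
  qed
  finally show ?thesis .
qed

lemma dim_two:
  fixes W :: "(bit^'n) set"
  assumes "vec.subspace W" "vec.dim W = CARD('n) - 2" "CARD('n) > 2"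
    and "p \<notin> W" "s \<notin> vec.span (insert p W)"
  shows "q \<in> W \<or> q + p \<in> W \<or> q + s \<in> W \<or> q + p + s \<in> W"
proof -
  have "p \<notin> vec.span W" using assms vec.span_eq_iff by blast
  hence d1: "vec.dim (insert p W) = vec.dim W + 1" by (simp add: vec.dim_insert)
  have d2: "vec.dim (insert s (insert p W)) = vec.dim W + 2"
    using d1 assms(5) by (simp add: vec.dim_insert)
  hence "vec.dim (insert s (insert p W)) = vec.dim (UNIV::(bit^'n) set)"
    using assms(2,3) vec_dim_card[where 'a=bit and 'n='n] by simp
  hence "vec.span (insert s (insert p W)) = UNIV"
    by (metis vec.dim_eq_full vec.dim_UNIV vec.dimension_def)
  hence "q \<in> vec.span (insert s (insert p W))" by simp
  then obtain k where "q - k *s s \<in> vec.span (insert p W)"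
    using vec.span_breakdown_eq by blast
  hence "q - k *s s \<in> W \<or> q - k *s s + p \<in> W"
    using span_ins_iff[OF assms(1)] by blast
  thus ?thesis using bit_cases2[of k]
    by (auto simp: vminus_eq add.commute add.left_commute)
qed
lemma vadd_self2[simp]: "(x::bit^'n) + (x + y) = y"
  by (simp add: vec_eq_iff)

theorem mainTheorem6:
  fixes W :: "(bit ^ 'n) set" and \<phi> :: "bit ^ 'n \<Rightarrow> bit ^ 'n"
  assumes "CARD('n) > 2"
    and "vec.subspace W"
    and "vec.dim W = CARD('n) - 2"
    and "bij \<phi>"
    and "\<phi> \<circ> \<phi> = id" and "\<phi> \<noteq> id"
    and "\<forall>w\<in>W. \<phi> \<circ> transl w = transl w \<circ> \<phi>"
    and "\<forall>x. \<phi> ` ((\<lambda>w. x + w) ` W) \<noteq> (\<lambda>w. x + w) ` W"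
  shows "\<phi> \<in> AGL"
proof -
  note sW = assms(2)
  have hW: "vec.span W = W" using sW vec.span_eq_iff by blast
  have W0: "0 \<in> W" using sW vec.subspace_0 by blast
  have Wadd: "\<And>x y. x \<in> W \<Longrightarrow> y \<in> W \<Longrightarrow> x + y \<in> W" using sW vec.subspace_add by blast
  have comm: "\<phi> (x + w) = \<phi> x + w" if "w \<in> W" for x w
  proof -
    have "(\<phi> \<circ> transl w) x = (transl w \<circ> \<phi>) x" using assms(7) that by simp
    thus ?thesis by (simp add: transl_def)
  qed
  have invol: "\<phi> (\<phi> x) = x" for x using assms(5) by (metis comp_apply id_apply)
  define a where "a x = \<phi> x + x" for x
  have phi: "\<phi> x = x + a x" for x by (simp add: a_def add_ac)
  have F1: "a (x + w) = a x" if "w \<in> W" for x w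
  proof -
    have e: "\<phi> (x + w) = \<phi> x + w" by (rule comm[OF that])
    show ?thesis unfolding a_def e by (simp add: add_ac)
  qed
  have F2: "a x \<notin> W" for x
  proof
    assume ax: "a x \<in> W"
    have "\<phi> ` ((\<lambda>w. x + w) ` W) = (\<lambda>w. x + w) ` W"
    proof (intro equalityI subsetI)
      fix z assume "z \<in> \<phi> ` ((\<lambda>w. x + w) ` W)"
      then obtain w where w: "w \<in> W" "z = \<phi> (x + w)" by auto
      have e: "\<phi> (x + w) = \<phi> x + w" by (rule comm[OF w(1)])
      have "z = x + (a x + w)" unfolding w(2) e phi[of x] by (simp add: add_ac)
      thus "z \<in> (\<lambda>w. x + w) ` W" using Wadd[OF ax w(1)] by blast
    next
      fix z assume "z \<in> (\<lambda>w. x + w) ` W"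
      then obtain w where w: "w \<in> W" "z = x + w" by auto
      have e: "\<phi> (x + (a x + w)) = \<phi> x + (a x + w)" by (rule comm[OF Wadd[OF ax w(1)]])
      have "\<phi> (x + (a x + w)) = z" unfolding e phi[of x] w(2) by (simp add: add_ac)
      thus "z \<in> \<phi> ` ((\<lambda>w. x + w) ` W)" using Wadd[OF ax w(1)] by blast
    qed
    thus False using assms(8) by blast
  qed
  have F3: "a (\<phi> x) = a x" for x by (simp add: a_def invol add_ac)
  have F5: "a (x + a x + w) = a x" if "w \<in> W" for x w
    using F1[OF that, of "x + a x"] F3[of x] phi[of x] by simp
  define u where "u = a 0"
  have uW: "u \<notin> W" using F2 u_def by blast
  have step1: "a y + u \<in> W" for y
  proof (cases "y \<in> vec.span (insert u W)")
    case True
    hence "y \<in> W \<or> y + u \<in> W" using span_ins_iff[OF sW] by blast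
    thus ?thesis
    proof
      assume "y \<in> W" thus ?thesis using F1[of y 0] W0 u_def by simp
    next
      assume h: "y + u \<in> W"
      have "a (0 + a 0 + (y + u)) = a 0" by (rule F5[OF h])
      hence "a y = u" by (simp add: u_def add_ac)
      thus ?thesis using W0 by simp
    qed
  next
    case False
    have "a y \<in> W \<or> a y + u \<in> W \<or> a y + y \<in> W \<or> a y + u + y \<in> W"
      by (rule dim_two[OF sW assms(3) assms(1) uW False])
    moreover have "a y + y \<in> W \<Longrightarrow> ?thesis"
    proof -
      assume h: "a y + y \<in> W"
      have "a (0 + (a y + y)) = a 0" by (rule F1[OF h])
      hence "a (\<phi> y) = u" by (simp add: phi u_def add_ac)
      thus ?thesis using F3 W0 by simp
    qed
    moreover have "a y + u + y \<in> W \<Longrightarrow> ?thesis"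
    proof -
      assume h: "a y + u + y \<in> W"
      have "a (0 + a 0 + (a y + u + y)) = a 0" by (rule F5[OF h])
      hence "a (\<phi> y) = u" by (simp add: phi u_def add_ac)
      thus ?thesis using F3 W0 by simp
    qed
    ultimately show ?thesis using F2 by blast
  qed
  define H where "H = vec.span (insert u W)"
  have sH: "vec.subspace H" unfolding H_def by (rule vec.subspace_span)
  have WH: "W \<subseteq> H" unfolding H_def by (meson subset_insertI vec.span_superset subset_trans)
  have Hadd: "\<And>x y. x \<in> H \<Longrightarrow> y \<in> H \<Longrightarrow> x + y \<in> H" using sH vec.subspace_add by blast
  have Hnot: "x + y \<in> H" if "x \<notin> H" "y \<notin> H" for x y
  proof -
    have "y \<in> W \<or> y + u \<in> W \<or> y + x \<in> W \<or> y + u + x \<in> W"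
      by (rule dim_two[OF sW assms(3) assms(1) uW that(1)[unfolded H_def]])
    moreover have "y \<notin> W \<and> y + u \<notin> W" using that(2) span_ins_iff[OF sW] H_def by blast
    ultimately have "y + x \<in> W \<or> (y + x) + u \<in> W" by (simp add: add_ac)
    thus ?thesis using span_ins_iff[OF sW] H_def by (simp add: add_ac)
  qed
  have aH: "a h = u" if "h \<in> H" for h
  proof -
    have "h \<in> W \<or> h + u \<in> W" using that span_ins_iff[OF sW] H_def by blast
    thus ?thesis
    proof
      assume "h \<in> W" thus ?thesis using F1[of h 0] u_def by simp
    next
      assume h: "h + u \<in> W"
      have "a (0 + a 0 + (h + u)) = a 0" by (rule F5[OF h])
      thus ?thesis by (simp add: u_def add_ac)
    qed
  qed
  have aN: "a y = a x" if "x \<notin> H" "y \<notin> H" for x y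
  proof -
    have "y + x \<in> W \<or> (y + x) + u \<in> W" using Hnot[OF that(2) that(1)] span_ins_iff[OF sW] H_def by blast
    thus ?thesis
    proof
      assume h: "y + x \<in> W"
      have "a (x + (y + x)) = a x" by (rule F1[OF h])
      thus ?thesis by (simp add: add_ac)
    next
      assume h: "y + x + u \<in> W"
      have "(y + x + u) + (a x + u) \<in> W" using Wadd[OF h step1[of x]] .
      hence "a (x + a x + ((y + x + u) + (a x + u))) = a x" by (rule F5)
      thus ?thesis by (simp add: add_ac)
    qed
  qed
  define x1 where "x1 = (SOME x. x \<notin> H)"
  define d where "d = u + a x1"
  have dH: "d \<in> H"
  proof (cases "\<exists>x. x \<notin> H")
    case True
    hence "x1 \<notin> H" unfolding x1_def by (rule someI_ex)
    thus ?thesis using WH step1[of x1] d_def by (auto simp: add_ac)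
  next
    case False thus ?thesis by blast
  qed
  define L where "L x = (if x \<in> H then x else x + d)" for x
  have phiL: "\<phi> x = L x + u" for x
  proof (cases "x \<in> H")
    case True thus ?thesis using phi aH L_def by simp
  next
    case False
    hence "x1 \<notin> H" unfolding x1_def by (metis (mono_tags) someI_ex)
    hence "a x = a x1" using aN False by blast
    thus ?thesis using phi False L_def d_def by (simp add: add_ac)
  qed
  have Ladd: "L (x + y) = L x + L y" for x y
    using Hadd Hnot dH unfolding L_def
    by (smt (verit) add.assoc add.commute vadd_self2)
  have H0: "0 \<in> H" using sH vec.subspace_0 by blast
  have lin: "Vector_Spaces.linear (*s) (*s) L"
  proof -
    have "L (c *s x) = c *s L x" for c :: bit and x
      using bit_cases2[of c] H0 by (auto simp: L_def)
    thus ?thesis unfolding Vector_Spaces.linear_iff using Ladd vec.vector_space_axioms by blast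
  qed
  have LL: "L (L x) = x" for x
    using dH Hadd unfolding L_def by (smt (verit) add.assoc vadd_self2 add.commute)
  have bL: "bij L" by (metis LL bij_betw_byWitness subset_UNIV surj_def)
  show ?thesis unfolding AGL_def using lin bL phiL by blast
qed
end
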